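(* Let $f:[0,1]^d\to\mathbb{R}$ be DR submodular. Let $y:[0,1]\to[0,1]^d$ be coordinatewise non-decreasing, i.e., $y(\mu)\le y(\mu')$ coordinatewise whenever $0\le\mu<\mu'\le1$. Then \[ \int_0^1 f(y(\mu))\,d\mu\le f\Big(\int_0^1y(\mu)\,d\mu\Big). \]
   Context: A smooth (twice continuously differentiable) function $f:[0,1]^d\to\mathbb{R}$ is diminishing-returns (DR) submodular if $\partial_{ij}f(x)\le0$ for all $i,j\in[d]$ and all $x\in[0,1]^d$. *)

theory Defs
  imports "HOL-Analysis.Analysis"
begin

definition unit_cube :: "(real ^ 'n) set" where
  "unit_cube = {x. \<forall>i. 0 \<le> x $ i \<and> x $ i \<le> 1}"

definition DR_submodular :: "(real ^ 'n \<Rightarrow> real) \<Rightarrow> bool" where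
  "DR_submodular f \<longleftrightarrow>
     (\<exists>(f' :: real ^ 'n \<Rightarrow> real ^ 'n) (f'' :: real ^ 'n \<Rightarrow> real ^ 'n ^ 'n).
        (\<forall>x\<in>unit_cube. (f has_derivative (\<lambda>h. f' x \<bullet> h)) (at x within unit_cube)) \<and>
        (\<forall>x\<in>unit_cube. (f' has_derivative (\<lambda>h. f'' x *v h)) (at x within unit_cube)) \<and>
        continuous_on unit_cube f'' \<and>
        (\<forall>x\<in>unit_cube. \<forall>i j. f'' x $ i $ j \<le> 0))"

end

theory Submission imports Defs begin

lemma cube_cbox: "unit_cube = cbox (0::real^'n) 1"
  by (auto simp: unit_cube_def mem_box_cart)

lemma convex_cube: "convex (unit_cube :: (real^'n) set)"
  by (simp add: cube_cbox)

lemma compact_cube: "compact (unit_cube :: (real^'n) set)"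
  by (simp add: cube_cbox)

lemma seg_in_cube:
  assumes "a \<in> unit_cube" "b \<in> unit_cube" "0 \<le> t" "t \<le> 1"
  shows "a + t *\<^sub>R (b - a) \<in> (unit_cube :: (real^'n) set)"
proof -
  have "a + t *\<^sub>R (b - a) = (1 - t) *\<^sub>R a + t *\<^sub>R b" by (simp add: algebra_simps)
  then show ?thesis using convex_cube assms unfolding convex_def
    by (metis add.commute diff_add_cancel diff_ge_0_iff_ge)
qed

lemma seg_mvt:
  fixes g :: "real^'n \<Rightarrow> real"
  assumes der: "\<And>x. x \<in> unit_cube \<Longrightarrow> (g has_derivative g' x) (at x within unit_cube)"
    and a: "a \<in> unit_cube" and b: "b \<in> unit_cube"
  shows "\<exists>t\<in>{0..1}. g b - g a = g' (a + t *\<^sub>R (b - a)) (b - a)"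
proof -
  let ?p = "\<lambda>t::real. a + t *\<^sub>R (b - a)"
  have "\<exists>t\<in>{0..1}. g (?p 1) - g (?p 0) = (\<lambda>s h. g' (?p s) (h *\<^sub>R (b - a))) t (1 - 0)"
  proof (rule mvt_very_simple)
    fix t :: real assume t: "0 \<le> t" "t \<le> 1"
    have pd: "(?p has_derivative (\<lambda>h. h *\<^sub>R (b - a))) (at t within {0..1})"
      by (auto intro!: derivative_eq_intros)
    show "((\<lambda>t. g (?p t)) has_derivative (\<lambda>h. g' (?p t) (h *\<^sub>R (b - a)))) (at t within {0..1})"
      by (rule has_derivative_in_compose2[OF der _ _ pd]) (use a b seg_in_cube t in auto)
  qed simp
  then show ?thesis by simp
qed

definition upd :: "real^'n \<Rightarrow> 'n \<Rightarrow> real \<Rightarrow> real^'n" where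
  "upd x i s = (\<chi> j. if j = i then s else x $ j)"

lemma upd_nth[simp]: "upd x i s $ j = (if j = i then s else x $ j)"
  by (simp add: upd_def)

lemma upd_cube: "x \<in> unit_cube \<Longrightarrow> 0 \<le> s \<Longrightarrow> s \<le> 1 \<Longrightarrow> upd x i s \<in> unit_cube"
  by (auto simp: unit_cube_def)

lemma grad_mono:
  fixes f' :: "real^'n \<Rightarrow> real^'n" and f'' :: "real^'n \<Rightarrow> real^'n^'n"
  assumes d2: "\<forall>x\<in>unit_cube. (f' has_derivative (\<lambda>h. f'' x *v h)) (at x within unit_cube)"
    and neg: "\<forall>x\<in>unit_cube. \<forall>i j. f'' x $ i $ j \<le> 0"
    and a: "a \<in> unit_cube" and b: "b \<in> unit_cube" and le: "\<forall>k. a $ k \<le> b $ k"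
  shows "f' b $ i \<le> f' a $ i"
proof -
  have der: "((\<lambda>x. f' x $ i) has_derivative (\<lambda>h. (f'' x *v h) $ i)) (at x within unit_cube)"
    if "x \<in> unit_cube" for x
    using has_derivative_compose[OF d2[rule_format, OF that] bounded_linear.has_derivative[OF bounded_linear_vec_nth[of i], of "\<lambda>x. x" "\<lambda>x. x"]]
    by (simp add: o_def)
  obtain t where t: "t \<in> {0..1}" and eq: "f' b $ i - f' a $ i = (f'' (a + t *\<^sub>R (b - a)) *v (b - a)) $ i"
    using seg_mvt[OF der a b] by blast
  have r: "a + t *\<^sub>R (b - a) \<in> unit_cube" using seg_in_cube a b t by auto
  have "(f'' (a + t *\<^sub>R (b - a)) *v (b - a)) $ i \<le> 0"
    unfolding matrix_vector_mult_def using neg r le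
    by (auto intro!: sum_nonpos mult_nonpos_nonneg)
  then show ?thesis using eq by simp
qed

lemma coord_concave:
  fixes f :: "real^'n \<Rightarrow> real" and f' :: "real^'n \<Rightarrow> real^'n" and f'' :: "real^'n \<Rightarrow> real^'n^'n"
  assumes d1: "\<forall>x\<in>unit_cube. (f has_derivative (\<lambda>h. f' x \<bullet> h)) (at x within unit_cube)"
    and d2: "\<forall>x\<in>unit_cube. (f' has_derivative (\<lambda>h. f'' x *v h)) (at x within unit_cube)"
    and neg: "\<forall>x\<in>unit_cube. \<forall>i j. f'' x $ i $ j \<le> 0"
    and x: "x \<in> unit_cube" and s: "0 \<le> s" "s \<le> 1" and s0: "0 \<le> s0" "s0 \<le> 1"
  shows "f (upd x i s) \<le> f (upd x i s0) + f' (upd x i s0) $ i * (s - s0)"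
proof -
  let ?a = "upd x i s0" and ?b = "upd x i s"
  have a: "?a \<in> unit_cube" and b: "?b \<in> unit_cube" using upd_cube x s s0 by auto
  obtain t where t: "t \<in> {0..1}" and eq: "f ?b - f ?a = f' (?a + t *\<^sub>R (?b - ?a)) \<bullet> (?b - ?a)"
    using seg_mvt[of f "\<lambda>x h. f' x \<bullet> h", OF _ a b] d1 by blast
  define r where "r = ?a + t *\<^sub>R (?b - ?a)"
  have r: "r \<in> unit_cube" using seg_in_cube a b t r_def by auto
  have rj: "r $ j = (if j = i then s0 + t * (s - s0) else x $ j)" for j
    by (simp add: r_def)
  have inner: "f' r \<bullet> (?b - ?a) = f' r $ i * (s - s0)"
  proof -
    have "f' r \<bullet> (?b - ?a) = (\<Sum>j\<in>UNIV. f' r $ j * (?b - ?a) $ j)"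
      by (simp add: inner_vec_def)
    also have "\<dots> = (\<Sum>j\<in>UNIV. if j = i then f' r $ i * (s - s0) else 0)"
      by (rule sum.cong) auto
    also have "\<dots> = f' r $ i * (s - s0)" by simp
    finally show ?thesis .
  qed
  have "f' r $ i * (s - s0) \<le> f' ?a $ i * (s - s0)"
  proof (cases "s0 \<le> s")
    case True
    have "\<forall>k. ?a $ k \<le> r $ k" using True t by (auto simp: rj)
    then have "f' r $ i \<le> f' ?a $ i" using grad_mono[OF d2 neg a r] by blast
    then show ?thesis using True by (simp add: mult_right_mono)
  next
    case False
    have "\<forall>k. r $ k \<le> ?a $ k" using False t by (auto simp: rj mult_nonneg_nonpos)
    then have "f' ?a $ i \<le> f' r $ i" using grad_mono[OF d2 neg r a] by blast
    then show ?thesis using False by (simp add: mult_right_mono_neg)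
  qed
  then show ?thesis using eq inner r_def by simp
qed

definition mono01 :: "(real \<Rightarrow> real^'n) \<Rightarrow> bool" where
  "mono01 z \<longleftrightarrow> (\<forall>\<mu> \<mu>'. 0 \<le> \<mu> \<and> \<mu> < \<mu>' \<and> \<mu>' \<le> 1 \<longrightarrow> (\<forall>i. z \<mu> $ i \<le> z \<mu>' $ i))"

lemma mono01_le: "mono01 z \<Longrightarrow> 0 \<le> \<mu> \<Longrightarrow> \<mu> \<le> \<mu>' \<Longrightarrow> \<mu>' \<le> 1 \<Longrightarrow> z \<mu> $ i \<le> z \<mu>' $ i"
  unfolding mono01_def by (cases "\<mu> = \<mu>'") auto

lemma comp_integrable:
  assumes "mono01 z" "mono_on {0..1} (\<lambda>\<mu>. z \<mu> $ i)"
  shows "(\<lambda>\<mu>. z \<mu> $ i) integrable_on {0..1}"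
  using assms(2) integrable_on_mono_on by blast

lemma mono_comp: "mono01 z \<Longrightarrow> mono_on {0..1} (\<lambda>\<mu>. z \<mu> $ i)"
  unfolding mono_on_def using mono01_le by fastforce

lemma z_integrable:
  assumes "mono01 (z :: real \<Rightarrow> real^'n)"
  shows "z integrable_on {0..1}"
proof (rule integrable_componentwise)
  fix b :: "real^'n" assume "b \<in> Basis"
  then obtain k where b: "b = axis k 1" by (auto simp: Basis_vec_def)
  have "(\<lambda>\<mu>. z \<mu> $ k) integrable_on {0..1}"
    using integrable_on_mono_on mono_comp[OF assms] by blast
  then show "(\<lambda>x. z x \<bullet> b) integrable_on {0..1}"
    by (simp add: b cart_eq_inner_axis)
qed

lemma fz_integrable:
  fixes f :: "real^'n \<Rightarrow> real"
  assumes cont: "continuous_on unit_cube f" and m: "mono01 z"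
    and c: "\<forall>\<mu>\<in>{0..1}. z \<mu> \<in> unit_cube"
  shows "(\<lambda>\<mu>. f (z \<mu>)) integrable_on {0..1}"
proof -
  define cl :: "real^'n \<Rightarrow> real^'n" where "cl = (\<lambda>x. \<chi> i. max 0 (min 1 (x $ i)))"
  have clc: "cl x \<in> unit_cube" for x by (auto simp: cl_def unit_cube_def)
  have clid: "x \<in> unit_cube \<Longrightarrow> cl x = x" for x
    by (auto simp: cl_def unit_cube_def vec_eq_iff)
  have ccl: "continuous_on UNIV cl" unfolding cl_def
    by (intro continuous_intros)
  have cg: "continuous_on UNIV (f \<circ> cl)"
    by (rule continuous_on_compose[OF ccl]) (use cont clc continuous_on_subset in blast)
  obtain B where B: "\<forall>x\<in>unit_cube. norm (f x) \<le> B"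
    using compact_imp_bounded[OF compact_continuous_image[OF cont compact_cube]]
    by (auto simp: bounded_iff)
  have zm: "z \<in> borel_measurable (lebesgue_on {0..1})"
    using integrable_imp_measurable[OF z_integrable[OF m]] .
  have gm: "(\<lambda>\<mu>. (f \<circ> cl) (z \<mu>)) \<in> borel_measurable (lebesgue_on {0..1})"
    using measurable_compose[OF zm borel_measurable_continuous_onI[OF cg]] by (simp add: o_def)
  have I: "(\<lambda>\<mu>. (f \<circ> cl) (z \<mu>)) integrable_on {0..1}"
    by (rule measurable_bounded_by_integrable_imp_integrable[OF gm, where g = "\<lambda>_. B"])
       (use clc B in \<open>auto simp del: real_norm_def\<close>)
  show ?thesis by (rule integrable_eq[OF I]) (use clid c in auto)
qed

lemma int_comp_bounds:
  assumes m: "mono01 z" and c: "\<forall>\<mu>\<in>{0..1}. z \<mu> \<in> unit_cube"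
  shows "0 \<le> integral {0..1} (\<lambda>\<mu>. z \<mu> $ i) \<and> integral {0..1} (\<lambda>\<mu>. z \<mu> $ i) \<le> 1"
proof -
  have I: "(\<lambda>\<mu>. z \<mu> $ i) integrable_on {0..1}" using integrable_on_mono_on mono_comp[OF m] by blast
  have "integral {0..1} (\<lambda>\<mu>::real. 0::real) \<le> integral {0..1} (\<lambda>\<mu>. z \<mu> $ i)"
    by (rule integral_le[OF _ I]) (use c in \<open>auto simp: unit_cube_def\<close>)
  moreover have "integral {0..1} (\<lambda>\<mu>. z \<mu> $ i) \<le> integral {0..1} (\<lambda>\<mu>::real. 1::real)"
    by (rule integral_le[OF I]) (use c in \<open>auto simp: unit_cube_def\<close>)
  ultimately show ?thesis by simp
qed

lemma step:
  fixes f :: "real^'n \<Rightarrow> real" and f' :: "real^'n \<Rightarrow> real^'n" and f'' :: "real^'n \<Rightarrow> real^'n^'n"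
  assumes d1: "\<forall>x\<in>unit_cube. (f has_derivative (\<lambda>h. f' x \<bullet> h)) (at x within unit_cube)"
    and d2: "\<forall>x\<in>unit_cube. (f' has_derivative (\<lambda>h. f'' x *v h)) (at x within unit_cube)"
    and neg: "\<forall>x\<in>unit_cube. \<forall>i j. f'' x $ i $ j \<le> 0"
    and zm: "mono01 z" and zc: "\<forall>\<mu>\<in>{0..1}. z \<mu> \<in> unit_cube"
  shows "integral {0..1} (\<lambda>\<mu>. f (z \<mu>)) \<le>
         integral {0..1} (\<lambda>\<mu>. f (upd (z \<mu>) i (integral {0..1} (\<lambda>\<mu>. z \<mu> $ i))))"
proof -
  define m where "m = integral {0..1} (\<lambda>\<mu>. z \<mu> $ i)"
  have m01: "0 \<le> m" "m \<le> 1" using int_comp_bounds[OF zm zc] m_def by auto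
  define u where "u = (\<lambda>\<mu>. upd (z \<mu>) i m)"
  have um: "mono01 u" using zm unfolding mono01_def u_def by auto
  have uc: "\<forall>\<mu>\<in>{0..1}. u \<mu> \<in> unit_cube" using zc m01 upd_cube u_def by auto
  have cont: "continuous_on unit_cube f"
    by (rule has_derivative_continuous_on[of unit_cube f "\<lambda>x h. f' x \<bullet> h"]) (use d1 in blast)
  have Iz: "(\<lambda>\<mu>. f (z \<mu>)) integrable_on {0..1}" using fz_integrable[OF cont zm zc] .
  have Iu: "(\<lambda>\<mu>. f (u \<mu>)) integrable_on {0..1}" using fz_integrable[OF cont um uc] .
  have Izi: "(\<lambda>\<mu>. z \<mu> $ i) integrable_on {0..1}" using integrable_on_mono_on mono_comp[OF zm] by blast
  define a where "a = (\<lambda>\<mu>. f' (u \<mu>) $ i)"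
  define b where "b = (\<lambda>\<mu>. z \<mu> $ i - m)"
  have aanti: "a \<mu>' \<le> a \<mu>" if "0 \<le> \<mu>" "\<mu> \<le> \<mu>'" "\<mu>' \<le> 1" for \<mu> \<mu>'
    unfolding a_def
  proof (rule grad_mono[OF d2 neg])
    show "u \<mu> \<in> unit_cube" "u \<mu>' \<in> unit_cube" using uc that by auto
    show "\<forall>k. u \<mu> $ k \<le> u \<mu>' $ k" using mono01_le[OF um that] by blast
  qed
  have bmono: "b \<mu> \<le> b \<mu>'" if "0 \<le> \<mu>" "\<mu> \<le> \<mu>'" "\<mu>' \<le> 1" for \<mu> \<mu>'
    unfolding b_def using mono01_le[OF zm that] by simp
  have pt: "f (z \<mu>) \<le> f (u \<mu>) + a \<mu> * b \<mu>" if "\<mu> \<in> {0..1}" for \<mu>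
  proof -
    have "z \<mu> = upd (u \<mu>) i (z \<mu> $ i)" by (simp add: u_def vec_eq_iff)
    moreover have "u \<mu> = upd (u \<mu>) i m" by (simp add: u_def vec_eq_iff)
    moreover have "0 \<le> z \<mu> $ i" "z \<mu> $ i \<le> 1" using zc that by (auto simp: unit_cube_def)
    ultimately show ?thesis
      using coord_concave[OF d1 d2 neg, of "u \<mu>" "z \<mu> $ i" m i] uc that m01
      unfolding a_def b_def by metis
  qed
  obtain c where c: "\<And>\<mu>. \<mu> \<in> {0..1} \<Longrightarrow> a \<mu> * b \<mu> \<le> c * b \<mu>"
  proof (cases "\<exists>\<nu>\<in>{0..1}. b \<nu> < 0")
    case False
    show ?thesis
    proof (rule that[of "a 0"])
      fix \<mu> :: real assume "\<mu> \<in> {0..1}"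
      then show "a \<mu> * b \<mu> \<le> a 0 * b \<mu>"
        using False aanti[of 0 \<mu>] by (auto intro!: mult_right_mono simp: not_less)
    qed
  next
    case True
    define S where "S = {\<nu>\<in>{0..1}. b \<nu> < 0}"
    have Sne: "S \<noteq> {}" using True S_def by auto
    have bdd: "bdd_below (a ` S)"
      by (rule bdd_belowI[of _ "a 1"]) (use aanti in \<open>auto simp: S_def\<close>)
    show ?thesis
    proof (rule that[of "Inf (a ` S)"])
      fix \<mu> :: real assume mu: "\<mu> \<in> {0..1}"
      show "a \<mu> * b \<mu> \<le> Inf (a ` S) * b \<mu>"
      proof (cases "b \<mu> < 0")
        case True
        then have "Inf (a ` S) \<le> a \<mu>" using mu bdd by (auto simp: S_def intro!: cInf_lower)
        then show ?thesis using True by (simp add: mult_right_mono_neg)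
      next
        case False
        have "a \<mu> \<le> Inf (a ` S)"
        proof (rule cInf_greatest)
          show "a ` S \<noteq> {}" using Sne by simp
          fix x assume "x \<in> a ` S"
          then obtain \<nu> where nu: "\<nu> \<in> S" "x = a \<nu>" by auto
          have "\<nu> \<le> \<mu>"
          proof (rule ccontr)
            assume "\<not> \<nu> \<le> \<mu>"
            then have "b \<mu> \<le> b \<nu>" using bmono[of \<mu> \<nu>] mu nu by (auto simp: S_def)
            then show False using False nu by (auto simp: S_def)
          qed
          then show "a \<mu> \<le> x" using aanti[of \<nu> \<mu>] mu nu by (auto simp: S_def)
        qed
        then show ?thesis using False by (simp add: mult_right_mono)
      qed
    qed
  qed
  have Ib: "b integrable_on {0..1}" unfolding b_def using Izi by (intro integrable_diff) auto
  have intb: "integral {0..1} b = 0"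
  proof -
    have "integral {0..1} b = integral {0..1} (\<lambda>\<mu>. z \<mu> $ i) - integral {0..1} (\<lambda>\<mu>::real. m)"
      unfolding b_def by (rule integral_diff[OF Izi integrable_const_ivl])
    then show ?thesis by (simp add: m_def)
  qed
  have "integral {0..1} (\<lambda>\<mu>. f (z \<mu>)) \<le> integral {0..1} (\<lambda>\<mu>. f (u \<mu>) + c * b \<mu>)"
  proof (rule integral_le[OF Iz])
    show "(\<lambda>\<mu>. f (u \<mu>) + c * b \<mu>) integrable_on {0..1}"
      using Iu integrable_on_cmult_left[OF Ib, of c] by (intro integrable_add) auto
    fix \<mu> :: real assume "\<mu> \<in> {0..1}"
    then show "f (z \<mu>) \<le> f (u \<mu>) + c * b \<mu>" using pt[of \<mu>] c[of \<mu>] by linarith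
  qed
  also have "\<dots> = integral {0..1} (\<lambda>\<mu>. f (u \<mu>))"
  proof -
    have Icb: "(\<lambda>\<mu>. c * b \<mu>) integrable_on {0..1}" using integrable_on_cmult_left[OF Ib, of c] by simp
    have "integral {0..1} (\<lambda>\<mu>. f (u \<mu>) + c * b \<mu>) = integral {0..1} (\<lambda>\<mu>. f (u \<mu>)) + integral {0..1} (\<lambda>\<mu>. c * b \<mu>)"
      by (rule integral_add[OF Iu Icb])
    also have "integral {0..1} (\<lambda>\<mu>. c * b \<mu>) = c * integral {0..1} b"
      by (rule integral_mult_right)
    finally show ?thesis using intb by simp
  qed
  finally show ?thesis unfolding u_def m_def .
qed

theorem mainTheorem9:
  fixes f :: "real ^ 'n \<Rightarrow> real" and y :: "real \<Rightarrow> real ^ 'n"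
  assumes "DR_submodular f"
    and "\<forall>\<mu>\<in>{0..1}. y \<mu> \<in> unit_cube"
    and "\<forall>\<mu> \<mu>'. 0 \<le> \<mu> \<and> \<mu> < \<mu>' \<and> \<mu>' \<le> 1 \<longrightarrow> (\<forall>i. y \<mu> $ i \<le> y \<mu>' $ i)"
  shows "integral {0..1} (\<lambda>\<mu>. f (y \<mu>)) \<le> f (integral {0..1} y)"
proof -
  obtain f' :: "real ^ 'n \<Rightarrow> real ^ 'n" and f'' :: "real ^ 'n \<Rightarrow> real ^ 'n ^ 'n" where
    d1: "\<forall>x\<in>unit_cube. (f has_derivative (\<lambda>h. f' x \<bullet> h)) (at x within unit_cube)"
    and d2: "\<forall>x\<in>unit_cube. (f' has_derivative (\<lambda>h. f'' x *v h)) (at x within unit_cube)"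
    and neg: "\<forall>x\<in>unit_cube. \<forall>i j. f'' x $ i $ j \<le> 0"
    using assms(1) unfolding DR_submodular_def by blast
  have ym: "mono01 y" using assms(3) unfolding mono01_def by blast
  have yc: "\<forall>\<mu>\<in>{0..1}. y \<mu> \<in> unit_cube" using assms(2) .
  define Y where "Y = integral {0..1} y"
  have Yk: "Y $ k = integral {0..1} (\<lambda>\<mu>. y \<mu> $ k)" for k
    unfolding Y_def using integral_component_eq_cart[OF z_integrable[OF ym]] by simp
  have Y01: "0 \<le> Y $ k \<and> Y $ k \<le> 1" for k using int_comp_bounds[OF ym yc] Yk by simp
  define W where "W = (\<lambda>K \<mu>. \<chi> k. if k \<in> K then Y $ k else y \<mu> $ k)"
  have Wm: "mono01 (W K)" for K using ym unfolding mono01_def W_def by auto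
  have Wc: "\<forall>\<mu>\<in>{0..1}. W K \<mu> \<in> unit_cube" for K using yc Y01 unfolding W_def unit_cube_def by auto
  have main: "integral {0..1} (\<lambda>\<mu>. f (y \<mu>)) \<le> integral {0..1} (\<lambda>\<mu>. f (W K \<mu>))" if "finite K" for K
    using that
  proof (induction K rule: finite_induct)
    case empty
    have "W {} = y" by (simp add: W_def vec_eq_iff fun_eq_iff)
    then show ?case by simp
  next
    case (insert i K)
    have "integral {0..1} (\<lambda>\<mu>. W K \<mu> $ i) = Y $ i"
      using insert(2) by (simp add: W_def Yk)
    moreover have "upd (W K \<mu>) i (Y $ i) = W (insert i K) \<mu>" for \<mu>
      by (simp add: W_def vec_eq_iff)
    ultimately have "integral {0..1} (\<lambda>\<mu>. f (W K \<mu>)) \<le> integral {0..1} (\<lambda>\<mu>. f (W (insert i K) \<mu>))"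
      using step[OF d1 d2 neg Wm Wc, of K i] by simp
    then show ?case using insert(3) by linarith
  qed
  have "W UNIV = (\<lambda>\<mu>. Y)" by (simp add: W_def vec_eq_iff fun_eq_iff)
  then show ?thesis using main[of UNIV] by (simp add: Y_def)
qed

end
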